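(* Let $d\geq 3$ and let $(M,g)$ be the Kasner spacetime $M=(0,\infty)\times\mathbb{R}^d$, $g=-dt^2+\sum_{i=1}^d t^{2p_i}\,dx_i^2$, with $\sum_i p_i=1$, $\sum_i p_i^2=1$ and at least one $p_i<0$. For every $\varepsilon>0$ there exists $T>0$ such that for every timelike curve $\gamma=(\gamma_t,\underline{\gamma}_1,\dots,\underline{\gamma}_d):I\to M$ for which there is some $s_0\in I$ with $\gamma_t(s_0)<T$, and for all $i\in\{1,\dots,d\}$ and all $s,\tilde s\in\gamma_t^{-1}((0,T])$, one has $|\underline{\gamma}_i(s)-\underline{\gamma}_i(\tilde s)|<\varepsilon$.
   Context: Points of $M$ are written $(t,x_1,\dots,x_d)$ and a curve $\gamma$ is written in components $\gamma(s)=(\gamma_t(s),\underline{\gamma}_1(s),\dots,\underline{\gamma}_d(s))$. Timelike curves are piecewise smooth with timelike tangents. *)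

theory Defs
  imports "HOL-Analysis.Analysis"
begin

definition kasner_g :: "('n::finite \<Rightarrow> real) \<Rightarrow> real \<Rightarrow> real \<Rightarrow> real^'n \<Rightarrow> real" where
  "kasner_g p t v0 v = - (v0^2) + (\<Sum>i\<in>UNIV. t powr (2 * p i) * (v $ i)^2)"

definition kasner_timelike :: "('n::finite \<Rightarrow> real) \<Rightarrow> real \<Rightarrow> real \<Rightarrow> real^'n \<Rightarrow> bool" where
  "kasner_timelike p t v0 v \<longleftrightarrow> kasner_g p t v0 v < 0"

text \<open>I is an interval, gamma is continuous, and off a finite set S of break points it is
  differentiable (one-sided at endpoints of I) with continuous derivative (vt, vx) which is
  timelike; the time orientation of the tangents is consistent along the curve
  (all future directed or all past directed).\<close>

definition kasner_timelike_curve ::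
  "('n::finite \<Rightarrow> real) \<Rightarrow> real set \<Rightarrow> (real \<Rightarrow> real) \<Rightarrow> (real \<Rightarrow> real^'n) \<Rightarrow> bool" where
  "kasner_timelike_curve p I gt gx \<longleftrightarrow>
     is_interval I \<and>
     (\<forall>s\<in>I. 0 < gt s) \<and>
     continuous_on I gt \<and> continuous_on I gx \<and>
     (\<exists>S vt vx. finite S \<and>
        continuous_on (I - S) vt \<and> continuous_on (I - S) vx \<and>
        (\<exists>\<sigma>::real. (\<sigma> = 1 \<or> \<sigma> = -1) \<and>
          (\<forall>s\<in>I - S.
             (gt has_real_derivative vt s) (at s within I) \<and>
             (gx has_vector_derivative vx s) (at s within I) \<and>
             kasner_timelike p (gt s) (vt s) (vx s) \<and>
             0 < \<sigma> * vt s)))"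

end

theory Submission
  imports Defs
begin

lemma mono_fin:
  fixes \<phi> :: "real \<Rightarrow> real"
  assumes I: "is_interval I" and c: "continuous_on I \<phi>" and S: "finite S"
    and d: "\<And>x. x \<in> I - S \<Longrightarrow> (\<phi> has_real_derivative D x) (at x within I) \<and> D x > 0"
    and a: "a \<in> I" and b: "b \<in> I" and ab: "a \<le> b"
  shows "\<phi> a \<le> \<phi> b"
proof -
  have sub: "{a..b} \<subseteq> I" using I a b
    by (metis atLeastAtMost_iff is_interval_1 subsetI)
  define f' where "f' x = (if x \<in> {a<..<b} - S then D x else 0)" for x
  have "(f' has_integral (\<phi> b - \<phi> a)) {a..b}"
  proof (rule fundamental_theorem_of_calculus_interior_strong[OF S ab])
    fix x assume x: "x \<in> {a<..<b} - S"
    have "x \<in> interior {a..b}" using x by auto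
    then have xi: "x \<in> interior I" using sub interior_mono by blast
    have "x \<in> I - S" using x sub by auto
    then have "(\<phi> has_real_derivative D x) (at x)" using d at_within_interior[OF xi] by metis
    then show "(\<phi> has_vector_derivative f' x) (at x)"
      using x by (simp add: f'_def has_real_derivative_iff_has_vector_derivative)
  next
    show "continuous_on {a..b} \<phi>" using c sub continuous_on_subset by blast
  qed
  moreover have "0 \<le> f' x" if "x \<in> {a..b}" for x
  proof (cases "x \<in> {a<..<b} - S")
    case True then have "x \<in> I - S" using sub by auto
    then show ?thesis using d[of x] True by (simp add: f'_def)
  qed (auto simp: f'_def)
  ultimately have "0 \<le> \<phi> b - \<phi> a" by (rule has_integral_nonneg)
  then show ?thesis by simp
qed

lemma tl_comp:
  fixes p :: "'n::finite \<Rightarrow> real"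
  assumes tl: "kasner_timelike p t v0 v" and t: "t > 0"
  shows "\<bar>v $ i\<bar> < t powr (- p i) * \<bar>v0\<bar>"
proof -
  have "t powr (2 * p i) * (v $ i)^2 \<le> (\<Sum>j\<in>UNIV. t powr (2 * p j) * (v $ j)^2)"
    by (rule member_le_sum) auto
  also have "\<dots> < v0^2" using tl by (simp add: kasner_timelike_def kasner_g_def)
  finally have h: "t powr (2 * p i) * (v $ i)^2 < v0^2" .
  have "t powr (2 * p i) * (v $ i)^2 = (t powr p i * \<bar>v $ i\<bar>)^2"
    by (simp add: power2_eq_square powr_add[symmetric] mult_ac)
  with h have "(t powr p i * \<bar>v $ i\<bar>)^2 < \<bar>v0\<bar>^2" by simp
  then have "t powr p i * \<bar>v $ i\<bar> < \<bar>v0\<bar>" by (rule power2_less_imp_less) simp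
  then have "\<bar>v $ i\<bar> < \<bar>v0\<bar> / t powr p i" using t by (simp add: field_simps)
  then show ?thesis using t by (simp add: powr_minus_divide)
qed

lemma Gderiv:
  assumes "t > 0" "q < 1"
  shows "((\<lambda>t. t powr (1 - q) / (1 - q)) has_real_derivative t powr (- q)) (at t)"
proof -
  have "((\<lambda>t. t powr (1 - q)) has_real_derivative (1 - q) * t powr (1 - q - 1)) (at t)"
    by (rule has_real_derivative_powr) (use assms in auto)
  then have "((\<lambda>t. t powr (1 - q) / (1 - q)) has_real_derivative (1 - q) * t powr (1 - q - 1) / (1 - q)) (at t)"
    by (rule DERIV_cdivide)
  then show ?thesis using assms by simp
qed
lemma curve_mono:
  fixes p :: "'n::finite \<Rightarrow> real"
  assumes pq: "p i < 1" and curve: "kasner_timelike_curve p I gt gx"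
    and s: "s \<in> I" and s': "s' \<in> I" and ss: "s \<le> s'"
  obtains \<sigma> :: real where "\<sigma> = 1 \<or> \<sigma> = -1"
    "\<bar>gx s' $ i - gx s $ i\<bar> \<le> \<sigma> * (gt s' powr (1 - p i) / (1 - p i) - gt s powr (1 - p i) / (1 - p i))"
proof -
  define q where "q = p i"
  define G where "G t = t powr (1 - q) / (1 - q)" for t
  from curve obtain S vt vx \<sigma> where I: "is_interval I" and pos: "\<forall>s\<in>I. 0 < gt s"
    and cgt: "continuous_on I gt" and cgx: "continuous_on I gx" and S: "finite S"
    and sg: "\<sigma> = 1 \<or> \<sigma> = -1"
    and dd: "\<forall>s\<in>I - S. (gt has_real_derivative vt s) (at s within I) \<and>
             (gx has_vector_derivative vx s) (at s within I) \<and>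
             kasner_timelike p (gt s) (vt s) (vx s) \<and> 0 < \<sigma> * vt s"
    unfolding kasner_timelike_curve_def by blast
  have key: "\<sigma> * G (gt s) + c * (gx s $ i) \<le> \<sigma> * G (gt s') + c * (gx s' $ i)"
    if c: "c = 1 \<or> c = -1" for c :: real
  proof (rule mono_fin[OF I _ S _ s s' ss])
    have "continuous_on I (\<lambda>x. G (gt x))"
      unfolding G_def
      by (intro continuous_intros cgt) (use pos pq q_def in auto)
    moreover have "continuous_on I (\<lambda>x. gx x $ i)"
      by (intro continuous_intros cgx)
    ultimately show "continuous_on I (\<lambda>x. \<sigma> * G (gt x) + c * (gx x $ i))"
      by (rule continuous_on_add[OF continuous_on_mult[OF continuous_on_const] continuous_on_mult[OF continuous_on_const]])
  next
    fix x assume x: "x \<in> I - S"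
    then have dx: "(gt has_real_derivative vt x) (at x within I)"
      "(gx has_vector_derivative vx x) (at x within I)"
      "kasner_timelike p (gt x) (vt x) (vx x)" "0 < \<sigma> * vt x" using dd by auto
    have gp: "gt x > 0" using pos x by auto
    have d1: "((\<lambda>x. G (gt x)) has_real_derivative gt x powr (- q) * vt x) (at x within I)"
      using DERIV_chain2[OF Gderiv[OF gp] dx(1), of q] pq q_def unfolding G_def by simp
    have d2: "((\<lambda>x. gx x $ i) has_real_derivative vx x $ i) (at x within I)"
      unfolding has_real_derivative_iff_has_vector_derivative
      using bounded_linear.has_vector_derivative[OF bounded_linear_vec_nth dx(2)] .
    have "((\<lambda>x. \<sigma> * G (gt x) + c * (gx x $ i)) has_real_derivative
        \<sigma> * (gt x powr (- q) * vt x) + c * (vx x $ i)) (at x within I)"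
      by (rule DERIV_add[OF DERIV_cmult[OF d1] DERIV_cmult[OF d2]])
    moreover have "\<sigma> * (gt x powr (- q) * vt x) + c * (vx x $ i) > 0"
    proof -
      have "\<bar>vx x $ i\<bar> < gt x powr (- q) * \<bar>vt x\<bar>"
        using tl_comp[OF dx(3) gp] q_def by simp
      moreover have sv: "\<sigma> * vt x = \<bar>vt x\<bar>" using sg dx(4) by auto
      moreover have "c * (vx x $ i) \<ge> - \<bar>vx x $ i\<bar>" using c by auto
      moreover have "\<sigma> * (gt x powr (- q) * vt x) = gt x powr (- q) * \<bar>vt x\<bar>"
        using sv by (metis mult.left_commute)
      ultimately show ?thesis by linarith
    qed
    ultimately show "((\<lambda>x. \<sigma> * G (gt x) + c * (gx x $ i)) has_real_derivative
        \<sigma> * (gt x powr (- q) * vt x) + c * (vx x $ i)) (at x within I) \<and>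
        \<sigma> * (gt x powr (- q) * vt x) + c * (vx x $ i) > 0" by blast
  qed
  have "\<bar>gx s' $ i - gx s $ i\<bar> \<le> \<sigma> * (G (gt s') - G (gt s))"
    using key[of 1] key[of "-1"] by (simp add: algebra_simps abs_le_iff)
  then show ?thesis using that sg unfolding G_def q_def by blast
qed

lemma curve_bound:
  fixes p :: "'n::finite \<Rightarrow> real"
  assumes pq: "p i < 1" and curve: "kasner_timelike_curve p I gt gx"
    and s: "s \<in> I" and s': "s' \<in> I" and T1: "gt s \<le> T" and T2: "gt s' \<le> T"
  shows "\<bar>gx s $ i - gx s' $ i\<bar> \<le> T powr (1 - p i) / (1 - p i)"
proof -
  have pos: "\<forall>s\<in>I. 0 < gt s" using curve unfolding kasner_timelike_curve_def by blast
  have bnd: "0 \<le> x powr (1 - p i) / (1 - p i) \<and> x powr (1 - p i) / (1 - p i) \<le> T powr (1 - p i) / (1 - p i)"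
    if "0 < x" "x \<le> T" for x
  proof -
    have "x powr (1 - p i) \<le> T powr (1 - p i)" by (rule powr_mono2) (use that pq in auto)
    then show ?thesis using pq by (auto simp: divide_right_mono)
  qed
  have gen: "\<bar>gx b $ i - gx a $ i\<bar> \<le> T powr (1 - p i) / (1 - p i)"
    if ab: "a \<in> I" "b \<in> I" "a \<le> b" "gt a \<le> T" "gt b \<le> T" for a b
  proof -
    obtain \<sigma> :: real where sg: "\<sigma> = 1 \<or> \<sigma> = -1" and
      h: "\<bar>gx b $ i - gx a $ i\<bar> \<le> \<sigma> * (gt b powr (1 - p i) / (1 - p i) - gt a powr (1 - p i) / (1 - p i))"
      using curve_mono[OF pq curve ab(1,2,3)] by blast
    have "0 \<le> gt a powr (1 - p i) / (1 - p i)" "gt a powr (1 - p i) / (1 - p i) \<le> T powr (1 - p i) / (1 - p i)"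
      "0 \<le> gt b powr (1 - p i) / (1 - p i)" "gt b powr (1 - p i) / (1 - p i) \<le> T powr (1 - p i) / (1 - p i)"
      using bnd pos ab by auto
    with h sg show ?thesis by auto
  qed
  show ?thesis
  proof (cases "s \<le> s'")
    case True then show ?thesis using gen[OF s s' True T1 T2] by (simp add: abs_minus_commute)
  next
    case False then show ?thesis using gen[OF s' s _ T2 T1] by simp
  qed
qed

theorem lemma3p6:
  fixes p :: "'n::finite \<Rightarrow> real"
  assumes "CARD('n) \<ge> 3"
    and "(\<Sum>i\<in>UNIV. p i) = 1"
    and "(\<Sum>i\<in>UNIV. (p i)^2) = 1"
    and "\<exists>i. p i < 0"
  shows "\<forall>\<epsilon>>0. \<exists>T>0. \<forall>(I::real set) gt (gx::real \<Rightarrow> real^'n).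
           kasner_timelike_curve p I gt gx \<and> (\<exists>s0\<in>I. gt s0 < T) \<longrightarrow>
           (\<forall>i. \<forall>s\<in>I. \<forall>s'\<in>I. gt s \<in> {0<..T} \<and> gt s' \<in> {0<..T} \<longrightarrow>
              \<bar>gx s $ i - gx s' $ i\<bar> < \<epsilon>)"
proof -
  obtain k where k: "p k < 0" using assms(4) by blast
  have plt: "p i < 1" for i
  proof (rule ccontr)
    assume "\<not> p i < 1"
    then have ge: "p i \<ge> 1" by simp
    have "i \<noteq> k" using k ge by auto
    have "(\<Sum>j\<in>{i,k}. (p j)^2) \<le> (\<Sum>j\<in>UNIV. (p j)^2)"
      by (rule sum_mono2) simp_all
    then have "(p i)^2 + (p k)^2 \<le> (\<Sum>j\<in>UNIV. (p j)^2)"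
      using \<open>i \<noteq> k\<close> by simp
    moreover have "(p i)^2 \<ge> 1" using ge by (simp add: one_le_power)
    moreover have "(p k)^2 > 0" using k by simp
    ultimately show False using assms(3) by linarith
  qed
  show ?thesis
  proof (intro allI impI)
    fix \<epsilon> :: real assume e: "\<epsilon> > 0"
    define Ti where "Ti i = (\<epsilon> * (1 - p i) / 2) powr (1 / (1 - p i))" for i
    define T where "T = Min (range Ti)"
    have Tipos: "Ti i > 0" for i using plt[of i] e by (simp add: Ti_def)
    have fin: "finite (range Ti)" by simp
    have Tpos: "T > 0" unfolding T_def using Tipos fin by (subst Min_gr_iff) auto
    have TTi: "T \<le> Ti i" for i unfolding T_def using fin by (intro Min_le) auto
    have bound: "T powr (1 - p i) / (1 - p i) < \<epsilon>" for i
    proof -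
      have "T powr (1 - p i) \<le> Ti i powr (1 - p i)"
        by (rule powr_mono2) (use plt[of i] Tpos TTi in auto)
      also have "\<dots> = \<epsilon> * (1 - p i) / 2"
        unfolding Ti_def using plt[of i] e by (simp add: powr_powr)
      finally have "T powr (1 - p i) / (1 - p i) \<le> \<epsilon> / 2"
        using plt[of i] by (simp add: divide_le_eq mult.commute)
      then show ?thesis using e by linarith
    qed
    show "\<exists>T>0. \<forall>(I::real set) gt (gx::real \<Rightarrow> real^'n).
           kasner_timelike_curve p I gt gx \<and> (\<exists>s0\<in>I. gt s0 < T) \<longrightarrow>
           (\<forall>i. \<forall>s\<in>I. \<forall>s'\<in>I. gt s \<in> {0<..T} \<and> gt s' \<in> {0<..T} \<longrightarrow>
              \<bar>gx s $ i - gx s' $ i\<bar> < \<epsilon>)"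
    proof (intro exI[of _ T] conjI allI impI ballI Tpos)
      fix I and gt :: "real \<Rightarrow> real" and gx :: "real \<Rightarrow> real^'n" and i s s'
      assume H: "kasner_timelike_curve p I gt gx \<and> (\<exists>s0\<in>I. gt s0 < T)"
        and s: "s \<in> I" and s': "s' \<in> I" and G: "gt s \<in> {0<..T} \<and> gt s' \<in> {0<..T}"
      have "\<bar>gx s $ i - gx s' $ i\<bar> \<le> T powr (1 - p i) / (1 - p i)"
        using curve_bound[OF plt[of i] conjunct1[OF H] s s'] G by auto
      then show "\<bar>gx s $ i - gx s' $ i\<bar> < \<epsilon>" using bound[of i] by linarith
    qed
  qed
qed

end
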